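(* Let $A=\mathbb{C}[x]/(x^2)$ and $M=A/(x)$. Then $\Gamma(M)\cong A[y]/(xy)$ with $y$ of degree $1$, and $\Gamma(M)^\vee$ is isomorphic to the subring $A[xT,xT^2,xT^3,\dots]$ of $\Gamma(A)^\vee\cong A[T]$. In particular the algebra $\Gamma(M)^\vee$ is not generated in degree $1$ and is not finitely generated as an $A$-algebra, so $\operatorname{Sym}(M^\ast)\to\Gamma(M)^\vee$ is not surjective.
   Context: The algebra of divided powers $\Gamma(N)$ of an $A$-module $N$ is $A[X(n,x)]_{(n,x)\in\mathbb{N}\times N}$ modulo the ideal generated by $X(0,x)-1$, $X(n,fx)-f^nX(n,x)$, $X(m,x)X(n,x)-\binom{m+n}{m}X(m+n,x)$, and $X(n,x+y)-\sum_{i+j=n}X(i,x)X(j,y)$, graded with $X(n,x)$ in degree $n$. Its graded dual $\Gamma(N)^\vee=\bigoplus_n\operatorname{Hom}_A(\Gamma^n(N),A)$ is a graded $A$-algebra with product $(u\bullet v)(\gamma)=(u\otimes v)(\Delta(\gamma))$, where $\Delta$ is the comultiplication induced by the diagonal $N\to N\oplus N$, $\gamma^n_N(x)\mapsto\sum_{i+j=n}\gamma^i_N(x)\otimes\gamma^j_N(x)$. The map $\operatorname{Sym}(M^\ast)\to\Gamma(M)^\vee$ is induced by identifying $M^\ast$ with the degree $1$ part of $\Gamma(M)^\vee$. *)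

theory Defs
  imports Complex_Main "HOL-Library.Poly_Mapping" "HOL-Computational_Algebra.Polynomial"
begin

section \<open>The base ring A = C[x]/(x^2) (dual numbers a + b x)\<close>

datatype dualnum = Dual (re: complex) (du: complex)

instantiation dualnum :: comm_ring_1
begin
definition "0 = Dual 0 0"
definition "1 = Dual 1 0"
definition "a + b = Dual (re a + re b) (du a + du b)"
definition "- a = Dual (- re a) (- du a)"
definition "a - b = Dual (re a - re b) (du a - du b)"
definition "a * b = Dual (re a * re b) (re a * du b + du a * re b)"
instance
  by standard (simp_all add: dualnum.expand zero_dualnum_def one_dualnum_def plus_dualnum_def
      uminus_dualnum_def minus_dualnum_def times_dualnum_def algebra_simps)
end

definition xeps :: dualnum where "xeps = Dual 0 1"

definition modrel :: "dualnum \<Rightarrow> dualnum \<Rightarrow> bool" where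
  "modrel a b \<longleftrightarrow> (\<exists>c. a - b = c * xeps)"

lemma modrel_iff: "modrel a b \<longleftrightarrow> re a = re b"
proof
  assume "modrel a b" then obtain c where "a - b = c * xeps" by (auto simp: modrel_def)
  then have "re (a - b) = re (c * xeps)" by simp
  then show "re a = re b" by (simp add: minus_dualnum_def times_dualnum_def xeps_def)
next
  assume h: "re a = re b"
  have "a - b = Dual (du a - du b) 0 * xeps"
    using h by (simp add: dualnum.expand minus_dualnum_def times_dualnum_def xeps_def)
  then show "modrel a b" by (auto simp: modrel_def)
qed

quotient_type modx = dualnum / modrel
  by (auto intro!: equivpI reflpI sympI transpI simp: modrel_iff)

instantiation modx :: ab_group_add
begin
lift_definition zero_modx :: modx is "0 :: dualnum" .
lift_definition plus_modx :: "modx \<Rightarrow> modx \<Rightarrow> modx" is "(+)"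
  by (simp add: modrel_iff plus_dualnum_def)
lift_definition uminus_modx :: "modx \<Rightarrow> modx" is uminus
  by (simp add: modrel_iff uminus_dualnum_def)
lift_definition minus_modx :: "modx \<Rightarrow> modx \<Rightarrow> modx" is "(-)"
  by (simp add: modrel_iff minus_dualnum_def)
instance
  by standard (transfer; simp add: modrel_iff algebra_simps)+
end

lift_definition modx_smul :: "dualnum \<Rightarrow> modx \<Rightarrow> modx" is "(*)"
  by (simp add: modrel_iff times_dualnum_def)

text \<open>The polynomial ring A[X(n,x)], (n,x) in nat x N.\<close>
type_synonym ('a, 'm) dpoly = "((nat \<times> 'm) \<Rightarrow>\<^sub>0 nat) \<Rightarrow>\<^sub>0 'a"

definition Xv :: "nat \<Rightarrow> 'm \<Rightarrow> ('a::comm_ring_1, 'm) dpoly" where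
  "Xv n x = Poly_Mapping.single (Poly_Mapping.single (n, x) 1) 1"

definition Cst :: "'a::comm_ring_1 \<Rightarrow> ('a, 'm) dpoly" where
  "Cst a = Poly_Mapping.single 0 a"

definition gen_ideal :: "'r::comm_ring_1 set \<Rightarrow> 'r set" where
  "gen_ideal S = {\<Sum>i<k. r i * s i | (k::nat) r s. \<forall>i<k. s i \<in> S}"

definition dp_rels :: "('a::comm_ring_1 \<Rightarrow> 'm::ab_group_add \<Rightarrow> 'm) \<Rightarrow> ('a, 'm) dpoly set" where
  "dp_rels smul =
     {Xv 0 x - 1 | x. True}
   \<union> {Xv n (smul f x) - Cst (f ^ n) * Xv n x | n f x. True}
   \<union> {Xv m x * Xv n x - Cst (of_nat (m + n choose m)) * Xv (m + n) x | m n x. True}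
   \<union> {Xv n (x + y) - (\<Sum>i\<le>n. Xv i x * Xv (n - i) y) | n x y. True}"

text \<open>Gamma(N) = A[X(n,x)] / dp_ideal.\<close>
definition dp_ideal :: "('a::comm_ring_1 \<Rightarrow> 'm::ab_group_add \<Rightarrow> 'm) \<Rightarrow> ('a, 'm) dpoly set" where
  "dp_ideal smul = gen_ideal (dp_rels smul)"

definition mdeg :: "((nat \<times> 'm) \<Rightarrow>\<^sub>0 nat) \<Rightarrow> nat" where
  "mdeg m = (\<Sum>v\<in>Poly_Mapping.keys m. fst v * Poly_Mapping.lookup m v)"

definition homog :: "nat \<Rightarrow> ('a::comm_ring_1, 'm) dpoly \<Rightarrow> bool" where
  "homog n p \<longleftrightarrow> (\<forall>m\<in>Poly_Mapping.keys p. mdeg m = n)"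

definition peval :: "('v \<Rightarrow> 'r::comm_ring_1) \<Rightarrow> ('a::comm_ring_1 \<Rightarrow> 'r) \<Rightarrow> (('v \<Rightarrow>\<^sub>0 nat) \<Rightarrow>\<^sub>0 'a) \<Rightarrow> 'r" where
  "peval f c p = (\<Sum>m\<in>Poly_Mapping.keys p. c (Poly_Mapping.lookup p m) * (\<Prod>v\<in>Poly_Mapping.keys m. f v ^ Poly_Mapping.lookup m v))"

text \<open>A[X(n,x)] tensor_A A[X(n,x)] identified with the polynomial ring in two copies
  of the variables (True = left factor, False = right factor).\<close>
definition X2 :: "bool \<Rightarrow> nat \<Rightarrow> 'm \<Rightarrow> ((bool \<times> nat \<times> 'm) \<Rightarrow>\<^sub>0 nat) \<Rightarrow>\<^sub>0 'a::comm_ring_1" where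
  "X2 b n x = Poly_Mapping.single (Poly_Mapping.single (b, n, x) 1) 1"

text \<open>Comultiplication induced by the diagonal: X(n,x) maps to sum_{i+j=n} X(i,x) (x) X(j,x).\<close>
definition comult :: "('a::comm_ring_1, 'm) dpoly \<Rightarrow> ((bool \<times> nat \<times> 'm) \<Rightarrow>\<^sub>0 nat) \<Rightarrow>\<^sub>0 'a" where
  "comult p = peval (\<lambda>(n, x). \<Sum>i\<le>n. X2 True i x * X2 False (n - i) x)
                    (\<lambda>a. Poly_Mapping.single 0 a) p"

text \<open>(u (x) v) applied to an element of the tensor square.\<close>
definition tensor_app ::
  "(('a::comm_ring_1, 'm) dpoly \<Rightarrow> 'a) \<Rightarrow> (('a, 'm) dpoly \<Rightarrow> 'a)
     \<Rightarrow> (((bool \<times> nat \<times> 'm) \<Rightarrow>\<^sub>0 nat) \<Rightarrow>\<^sub>0 'a) \<Rightarrow> 'a" where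
  "tensor_app u v q = (\<Sum>m\<in>Poly_Mapping.keys q. Poly_Mapping.lookup q m
      * u (\<Prod>w\<in>{w\<in>Poly_Mapping.keys m. fst w}. Xv (fst (snd w)) (snd (snd w)) ^ Poly_Mapping.lookup m w)
      * v (\<Prod>w\<in>{w\<in>Poly_Mapping.keys m. \<not> fst w}. Xv (fst (snd w)) (snd (snd w)) ^ Poly_Mapping.lookup m w))"

text \<open>An element of the graded dual = an A-linear functional on Gamma(N)
  (i.e. on A[X(n,x)] vanishing on the ideal) vanishing on Gamma^n(N) for all large n.\<close>
definition gdual :: "('a::comm_ring_1 \<Rightarrow> 'm::ab_group_add \<Rightarrow> 'm) \<Rightarrow> (('a, 'm) dpoly \<Rightarrow> 'a) set" where
  "gdual smul = {u. (\<forall>p q. u (p + q) = u p + u q) \<and> (\<forall>a p. u (Cst a * p) = a * u p)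
                   \<and> (\<forall>p\<in>dp_ideal smul. u p = 0)
                   \<and> (\<exists>N. \<forall>n\<ge>N. \<forall>p. homog n p \<longrightarrow> u p = 0)}"

definition dhomog :: "nat \<Rightarrow> (('a::comm_ring_1, 'm) dpoly \<Rightarrow> 'a) \<Rightarrow> bool" where
  "dhomog n u \<longleftrightarrow> (\<forall>k p. k \<noteq> n \<longrightarrow> homog k p \<longrightarrow> u p = 0)"

definition dprod :: "(('a::comm_ring_1, 'm) dpoly \<Rightarrow> 'a) \<Rightarrow> (('a, 'm) dpoly \<Rightarrow> 'a) \<Rightarrow> ('a, 'm) dpoly \<Rightarrow> 'a" where
  "dprod u v = (\<lambda>p. tensor_app u v (comult p))"

text \<open>Unit of the graded dual: the augmentation Gamma(N) -> Gamma^0(N) = A.\<close>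
definition dunit :: "('a::comm_ring_1, 'm) dpoly \<Rightarrow> 'a" where
  "dunit = peval (\<lambda>(n, x). if n = 0 then 1 else 0) (\<lambda>a. a)"

inductive_set dsubalg :: "(('a::comm_ring_1, 'm) dpoly \<Rightarrow> 'a) set \<Rightarrow> (('a, 'm) dpoly \<Rightarrow> 'a) set"
  for G where
  unit: "(\<lambda>p. a * dunit p) \<in> dsubalg G"
| gen: "u \<in> G \<Longrightarrow> u \<in> dsubalg G"
| add: "u \<in> dsubalg G \<Longrightarrow> v \<in> dsubalg G \<Longrightarrow> (\<lambda>p. u p + v p) \<in> dsubalg G"
| smul: "u \<in> dsubalg G \<Longrightarrow> (\<lambda>p. a * u p) \<in> dsubalg G"
| mult: "u \<in> dsubalg G \<Longrightarrow> v \<in> dsubalg G \<Longrightarrow> dprod u v \<in> dsubalg G"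

inductive_set palg :: "'a::comm_ring_1 poly set \<Rightarrow> 'a poly set" for G where
  const: "[:a:] \<in> palg G"
| gen: "g \<in> G \<Longrightarrow> g \<in> palg G"
| add: "f \<in> palg G \<Longrightarrow> g \<in> palg G \<Longrightarrow> f + g \<in> palg G"
| mult: "f \<in> palg G \<Longrightarrow> g \<in> palg G \<Longrightarrow> f * g \<in> palg G"

text \<open>phi : A[X(n,x)] -> A[y] is a graded A-algebra map inducing an isomorphism
  Gamma(N) = A[X(n,x)]/dp_ideal  ~=  A[y]/J  (y in degree 1, J homogeneous).\<close>
definition gamma_quot_iso ::
  "('a::comm_ring_1 \<Rightarrow> 'm::ab_group_add \<Rightarrow> 'm) \<Rightarrow> (('a, 'm) dpoly \<Rightarrow> 'a poly) \<Rightarrow> 'a poly set \<Rightarrow> bool" where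
  "gamma_quot_iso smul \<phi> J \<longleftrightarrow>
     (\<forall>p q. \<phi> (p + q) = \<phi> p + \<phi> q \<and> \<phi> (p * q) = \<phi> p * \<phi> q)
   \<and> (\<forall>a. \<phi> (Cst a) = [:a:])
   \<and> (\<forall>p. \<phi> p \<in> J \<longleftrightarrow> p \<in> dp_ideal smul)
   \<and> (\<forall>q. \<exists>p. \<phi> p - q \<in> J)
   \<and> (\<forall>n p. homog n p \<longrightarrow> (\<exists>c. \<phi> p - monom c n \<in> J))"

definition dual_iso ::
  "('a::comm_ring_1 \<Rightarrow> 'm::ab_group_add \<Rightarrow> 'm) \<Rightarrow> ((('a, 'm) dpoly \<Rightarrow> 'a) \<Rightarrow> 'a poly) \<Rightarrow> 'a poly set \<Rightarrow> bool" where
  "dual_iso smul \<Phi> S \<longleftrightarrow>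
     bij_betw \<Phi> (gdual smul) S
   \<and> (\<forall>u\<in>gdual smul. \<forall>v\<in>gdual smul.
        \<Phi> (\<lambda>p. u p + v p) = \<Phi> u + \<Phi> v \<and> \<Phi> (dprod u v) = \<Phi> u * \<Phi> v)
   \<and> (\<forall>a. \<forall>u\<in>gdual smul. \<Phi> (\<lambda>p. a * u p) = smult a (\<Phi> u))
   \<and> (\<forall>u\<in>gdual smul. \<forall>n. dhomog n u \<longleftrightarrow> (\<exists>c. \<Phi> u = monom c n))"

end

theory Submission
  imports Defs
begin

lemma gen_ideal_0: "0 \<in> gen_ideal S"
  unfolding gen_ideal_def by (rule CollectI, rule exI[of _ 0]) auto

lemma gen_ideal_gen: "s \<in> S \<Longrightarrow> s \<in> gen_ideal S"
  unfolding gen_ideal_def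
  by (rule CollectI, rule exI[of _ 1], rule exI[of _ "\<lambda>_. 1"], rule exI[of _ "\<lambda>_. s"]) auto

lemma gen_ideal_add:
  assumes "a \<in> gen_ideal S" "b \<in> gen_ideal S" shows "a + b \<in> gen_ideal S"
proof -
  obtain k :: nat and r s where a: "a = (\<Sum>i<k. r i * s i)" "\<forall>i<k. s i \<in> S" using assms(1) by (auto simp: gen_ideal_def)
  obtain l :: nat and r' s' where b: "b = (\<Sum>i<l. r' i * s' i)" "\<forall>i<l. s' i \<in> S" using assms(2) by (auto simp: gen_ideal_def)
  define R where "R i = (if i < k then r i else r' (i - k))" for i
  define T where "T i = (if i < k then s i else s' (i - k))" for i
  have "(\<Sum>i<k+l. R i * T i) = (\<Sum>i<k. R i * T i) + (\<Sum>i<l. R (k+i) * T (k+i))"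
    by (induction l) (simp_all add: add.assoc)
  also have "\<dots> = a + b" using a b by (simp add: R_def T_def)
  finally have "a + b = (\<Sum>i<k+l. R i * T i)" by simp
  moreover have "\<forall>i<k+l. T i \<in> S" using a b by (auto simp: T_def)
  ultimately show ?thesis unfolding gen_ideal_def by blast
qed

lemma gen_ideal_mult:
  assumes "a \<in> gen_ideal S" shows "c * a \<in> gen_ideal S"
proof -
  obtain k :: nat and r s where a: "a = (\<Sum>i<k. r i * s i)" "\<forall>i<k. s i \<in> S" using assms(1) by (auto simp: gen_ideal_def)
  have "c * a = (\<Sum>i<k. (c * r i) * s i)" using a by (simp add: sum_distrib_left mult.assoc)
  then show ?thesis using a unfolding gen_ideal_def
    by (intro CollectI exI[of _ k] exI[of _ "\<lambda>i. c * r i"] exI[of _ s]) simp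
qed

lemma gen_ideal_mult2: "a \<in> gen_ideal S \<Longrightarrow> a * c \<in> gen_ideal S"
  using gen_ideal_mult[of a S c] by (simp add: mult.commute)

lemma gen_ideal_uminus: "a \<in> gen_ideal S \<Longrightarrow> - a \<in> gen_ideal S"
  using gen_ideal_mult[of a S "-1"] by simp

lemma gen_ideal_diff: "a \<in> gen_ideal S \<Longrightarrow> b \<in> gen_ideal S \<Longrightarrow> a - b \<in> gen_ideal S"
  using gen_ideal_add[of a S "-b"] gen_ideal_uminus by auto

lemma gen_ideal_sum: "(\<And>i. i \<in> K \<Longrightarrow> f i \<in> gen_ideal S) \<Longrightarrow> sum f K \<in> gen_ideal S"
  by (induction K rule: infinite_finite_induct) (auto intro: gen_ideal_0 gen_ideal_add)

lemma gen_ideal_image: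
  assumes "a \<in> gen_ideal S"
    and hadd: "\<And>p q. h (p + q) = h p + h q" and hmul: "\<And>p q. h (p * q) = h p * h q"
    and h0: "h 0 = 0"
    and hS: "\<And>s. s \<in> S \<Longrightarrow> h s \<in> gen_ideal T"
  shows "h a \<in> gen_ideal T"
proof -
  obtain k :: nat and r s where a: "a = (\<Sum>i<k. r i * s i)" "\<forall>i<k. s i \<in> S" using assms(1) by (auto simp: gen_ideal_def)
  have hs: "h (sum f K) = (\<Sum>i\<in>K. h (f i))" for f and K :: "nat set"
    by (induction K rule: infinite_finite_induct) (auto simp: h0 hadd)
  show ?thesis unfolding a hs hmul using a by (auto intro!: gen_ideal_sum gen_ideal_mult hS)
qed


lemma pm_sum_single: "p = (\<Sum>m\<in>Poly_Mapping.keys p. Poly_Mapping.single m (Poly_Mapping.lookup p m))"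
  by (rule poly_mapping_eqI)
     (simp add: lookup_sum lookup_single when_def in_keys_iff sum.delta' split: if_splits)

lemma Cst_mult: "Cst a * Cst b = Cst (a * b)"
  by (simp add: Cst_def mult_single)
lemma Cst_add: "Cst (a + b) = Cst a + Cst b"
  by (simp add: Cst_def single_add)
lemma Cst_diff: "Cst (a - b) = Cst a - Cst b"
  by (simp add: Cst_def single_diff)
lemma Cst_uminus: "Cst (- a) = - Cst a"
  by (simp add: Cst_def single_uminus)
lemma Cst_0[simp]: "Cst 0 = 0"
  by (simp add: Cst_def)
lemma Cst_1[simp]: "Cst 1 = 1"
  by (simp add: Cst_def)
lemma Cst_sum: "Cst (sum f K) = (\<Sum>i\<in>K. Cst (f i))"
  by (induction K rule: infinite_finite_induct) (auto simp: Cst_add)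
lemma single_Cst: "Poly_Mapping.single m a = Cst a * Poly_Mapping.single m 1"
  by (simp add: Cst_def mult_single)

lemma keys_add_nat:
  fixes m1 m2 :: "'v \<Rightarrow>\<^sub>0 nat"
  shows "Poly_Mapping.keys (m1 + m2) = Poly_Mapping.keys m1 \<union> Poly_Mapping.keys m2"
  by (auto simp: in_keys_iff lookup_add)

lemma sum_keys_ext:
  fixes m :: "'v \<Rightarrow>\<^sub>0 'b::zero"
  assumes "finite K" "Poly_Mapping.keys m \<subseteq> K" "\<And>v. g v 0 = (0::'c::comm_monoid_add)"
  shows "(\<Sum>v\<in>Poly_Mapping.keys m. g v (Poly_Mapping.lookup m v)) = (\<Sum>v\<in>K. g v (Poly_Mapping.lookup m v))"
  by (rule sum.mono_neutral_left) (use assms in \<open>auto simp: in_keys_iff\<close>)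

lemma prod_keys_ext:
  fixes m :: "'v \<Rightarrow>\<^sub>0 'b::zero"
  assumes "finite K" "Poly_Mapping.keys m \<subseteq> K" "\<And>v. g v 0 = (1::'c::comm_monoid_mult)"
  shows "(\<Prod>v\<in>Poly_Mapping.keys m. g v (Poly_Mapping.lookup m v)) = (\<Prod>v\<in>K. g v (Poly_Mapping.lookup m v))"
  by (rule prod.mono_neutral_left) (use assms in \<open>auto simp: in_keys_iff\<close>)

lemma mdeg_add: "mdeg (m1 + m2) = mdeg m1 + mdeg m2"
proof -
  let ?K = "Poly_Mapping.keys m1 \<union> Poly_Mapping.keys m2"
  have "mdeg (m1 + m2) = (\<Sum>v\<in>?K. fst v * Poly_Mapping.lookup (m1 + m2) v)"
    unfolding mdeg_def keys_add_nat ..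
  also have "\<dots> = (\<Sum>v\<in>?K. fst v * Poly_Mapping.lookup m1 v) + (\<Sum>v\<in>?K. fst v * Poly_Mapping.lookup m2 v)"
    by (simp add: lookup_add sum.distrib algebra_simps)
  also have "\<dots> = mdeg m1 + mdeg m2"
    unfolding mdeg_def
    by (subst (1 2) sum_keys_ext[where K = ?K]) auto
  finally show ?thesis .
qed

lemma mdeg_0[simp]: "mdeg 0 = 0" by (simp add: mdeg_def)
lemma mdeg_single[simp]: "mdeg (Poly_Mapping.single (n, x) k) = n * k"
  by (simp add: mdeg_def)

definition mon :: "('v \<Rightarrow> 'r::comm_ring_1) \<Rightarrow> ('v \<Rightarrow>\<^sub>0 nat) \<Rightarrow> 'r" where
  "mon f m = (\<Prod>v\<in>Poly_Mapping.keys m. f v ^ Poly_Mapping.lookup m v)"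

lemma mon_add: "mon f (m1 + m2) = mon f m1 * mon f m2"
proof -
  let ?K = "Poly_Mapping.keys m1 \<union> Poly_Mapping.keys m2"
  have "mon f (m1 + m2) = (\<Prod>v\<in>?K. f v ^ Poly_Mapping.lookup (m1 + m2) v)"
    unfolding mon_def keys_add_nat ..
  also have "\<dots> = (\<Prod>v\<in>?K. f v ^ Poly_Mapping.lookup m1 v) * (\<Prod>v\<in>?K. f v ^ Poly_Mapping.lookup m2 v)"
    by (simp add: lookup_add prod.distrib power_add)
  also have "\<dots> = mon f m1 * mon f m2"
    unfolding mon_def
    by (subst (1 2) prod_keys_ext[where K = ?K]) auto
  finally show ?thesis .
qed

lemma mon_0[simp]: "mon f 0 = 1" by (simp add: mon_def)
lemma mon_single[simp]: "mon f (Poly_Mapping.single v k) = f v ^ k"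
  by (simp add: mon_def)

lemma peval_alt: "peval f c p = (\<Sum>m\<in>Poly_Mapping.keys p. c (Poly_Mapping.lookup p m) * mon f m)"
  by (simp add: peval_def mon_def)

locale chom =
  fixes c :: "'a::comm_ring_1 \<Rightarrow> 'r::comm_ring_1"
  assumes c_add: "c (a + b) = c a + c b" and c_mult: "c (a * b) = c a * c b" and c_1: "c 1 = 1"
begin

lemma c_0: "c 0 = 0"
  using c_add[of 0 0] by simp

lemma peval_add: "peval f c (p + q) = peval f c p + peval f c q"
  unfolding peval_alt
  by (rule setsum_keys_plus_distrib) (auto simp: c_0 c_add lookup_add algebra_simps)

lemma peval_0: "peval f c 0 = 0"
  by (simp add: peval_def)

lemma peval_sum: "peval f c (sum g K) = (\<Sum>i\<in>K. peval f c (g i))"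
  by (induction K rule: infinite_finite_induct) (auto simp: peval_0 peval_add)

lemma peval_single: "peval f c (Poly_Mapping.single m a) = c a * mon f m"
  by (simp add: peval_alt c_0)

lemma peval_mult: "peval f c (p * q) = peval f c p * peval f c q"
proof -
  have "p * q = (\<Sum>m\<in>Poly_Mapping.keys p. \<Sum>m'\<in>Poly_Mapping.keys q.
            Poly_Mapping.single (m + m') (Poly_Mapping.lookup p m * Poly_Mapping.lookup q m'))"
    apply (subst (1) pm_sum_single[of p], subst (1) pm_sum_single[of q])
    by (simp add: sum_product mult_single)
  then have "peval f c (p * q) = (\<Sum>m\<in>Poly_Mapping.keys p. \<Sum>m'\<in>Poly_Mapping.keys q.
        c (Poly_Mapping.lookup p m) * mon f m * (c (Poly_Mapping.lookup q m') * mon f m'))"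
    by (simp add: peval_sum peval_single c_mult mon_add mult_ac)
  also have "\<dots> = peval f c p * peval f c q"
    by (simp add: peval_alt sum_product)
  finally show ?thesis .
qed

lemma peval_diff: "peval f c (p - q) = peval f c p - peval f c q"
  using peval_add[of f "p - q" q] by simp

lemma peval_single0: "peval f c (Poly_Mapping.single 0 a) = c a"
  by (simp add: peval_single)

lemma peval_1: "peval f c 1 = 1"
  using peval_single0[of f 1] by (simp add: c_1)

lemma peval_Cst: "peval f c (Cst a) = c a"
  by (simp add: Cst_def peval_single0)

end

lemma peval_Xv: "peval f c (Xv n x) = c 1 * f (n, x)"
  by (simp add: Xv_def peval_alt)


context
  fixes smul :: "'a::comm_ring_1 \<Rightarrow> 'm::ab_group_add \<Rightarrow> 'm"
begin

lemma rel0: "Xv 0 x - 1 \<in> dp_ideal smul"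
  unfolding dp_ideal_def by (rule gen_ideal_gen) (auto simp: dp_rels_def)
lemma rel1: "Xv n (smul f x) - Cst (f ^ n) * Xv n x \<in> dp_ideal smul"
  unfolding dp_ideal_def by (rule gen_ideal_gen) (unfold dp_rels_def, blast)
lemma rel2: "Xv m x * Xv n x - Cst (of_nat (m + n choose m)) * Xv (m + n) x \<in> dp_ideal smul"
  unfolding dp_ideal_def by (rule gen_ideal_gen) (unfold dp_rels_def, blast)
lemma rel3: "Xv n (x + y) - (\<Sum>i\<le>n. Xv i x * Xv (n - i) y) \<in> dp_ideal smul"
  unfolding dp_ideal_def by (rule gen_ideal_gen) (unfold dp_rels_def, blast)

lemma I_0: "0 \<in> dp_ideal smul" unfolding dp_ideal_def by (rule gen_ideal_0)
lemma I_add: "p \<in> dp_ideal smul \<Longrightarrow> q \<in> dp_ideal smul \<Longrightarrow> p + q \<in> dp_ideal smul"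
  unfolding dp_ideal_def by (rule gen_ideal_add)
lemma I_diff: "p \<in> dp_ideal smul \<Longrightarrow> q \<in> dp_ideal smul \<Longrightarrow> p - q \<in> dp_ideal smul"
  unfolding dp_ideal_def by (rule gen_ideal_diff)
lemma I_mult: "p \<in> dp_ideal smul \<Longrightarrow> r * p \<in> dp_ideal smul"
  unfolding dp_ideal_def by (rule gen_ideal_mult)
lemma I_mult2: "p \<in> dp_ideal smul \<Longrightarrow> p * r \<in> dp_ideal smul"
  unfolding dp_ideal_def by (rule gen_ideal_mult2)
lemma I_sum: "(\<And>i. i \<in> K \<Longrightarrow> f i \<in> dp_ideal smul) \<Longrightarrow> sum f K \<in> dp_ideal smul"
  unfolding dp_ideal_def by (rule gen_ideal_sum)

definition cng :: "('a, 'm) dpoly \<Rightarrow> ('a, 'm) dpoly \<Rightarrow> bool" where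
  "cng p q \<longleftrightarrow> p - q \<in> dp_ideal smul"

lemma cng_refl: "cng p p" by (simp add: cng_def I_0)
lemma cng_sym: "cng p q \<Longrightarrow> cng q p"
  unfolding cng_def using I_diff[OF I_0] by fastforce
lemma cng_trans: "cng p q \<Longrightarrow> cng q r \<Longrightarrow> cng p r"
  unfolding cng_def using I_add by fastforce
lemma cng_add: "cng p p' \<Longrightarrow> cng q q' \<Longrightarrow> cng (p + q) (p' + q')"
  unfolding cng_def using I_add by (fastforce simp: algebra_simps)
lemma cng_mult: "cng p p' \<Longrightarrow> cng q q' \<Longrightarrow> cng (p * q) (p' * q')"
proof -
  assume "cng p p'" "cng q q'"
  then have "(p - p') * q + p' * (q - q') \<in> dp_ideal smul"
    unfolding cng_def by (intro I_add I_mult I_mult2)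
  then show ?thesis unfolding cng_def by (simp add: algebra_simps)
qed
lemma cng_sum: "(\<And>i. i \<in> K \<Longrightarrow> cng (f i) (g i)) \<Longrightarrow> cng (sum f K) (sum g K)"
  by (induction K rule: infinite_finite_induct) (auto intro: cng_refl cng_add)
lemma cng_I: "cng p q \<Longrightarrow> p \<in> dp_ideal smul \<longleftrightarrow> q \<in> dp_ideal smul"
  unfolding cng_def using I_diff I_add by fastforce

lemma cng_X0: "cng 1 (Cst 1 * Xv 0 x)"
proof -
  have "cng (Xv 0 x) 1" using rel0[of x] by (simp add: cng_def)
  then show ?thesis by (simp add: cng_sym)
qed

lemma cng_MUL: "cng (Xv i x * Xv j x) (Cst (of_nat (i + j choose i)) * Xv (i + j) x)"
  unfolding cng_def by (rule rel2)

lemma single_single_pow: "Poly_Mapping.single (Poly_Mapping.single v k) (1::'a) = Xv (fst v) (snd v) ^ k"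
proof (induction k)
  case 0 then show ?case by simp
next
  case (Suc k)
  have "Poly_Mapping.single (Poly_Mapping.single v (Suc k)) (1::'a)
      = Poly_Mapping.single (Poly_Mapping.single v k + Poly_Mapping.single v 1) 1"
    by (simp add: single_add[symmetric])
  also have "\<dots> = Poly_Mapping.single (Poly_Mapping.single v k) 1 * Xv (fst v) (snd v)"
    by (simp add: mult_single Xv_def)
  finally show ?case using Suc by (simp add: mult.commute)
qed

end

locale dpctx =
  fixes smul :: "'a::comm_ring_1 \<Rightarrow> 'm::ab_group_add \<Rightarrow> 'm" and x0 :: 'm
  assumes H: "\<And>n x. \<exists>b. cng smul (Xv n x) (Cst b * Xv n x0)"
begin

lemma POW: "\<exists>b. cng smul (Xv n x ^ k) (Cst b * Xv (n * k) x0)"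
proof (induction k)
  case 0
  have "cng smul 1 (Cst 1 * Xv 0 x0)"
    by (rule cng_X0)
  then show ?case by (intro exI[of _ 1]) simp
next
  case (Suc k)
  obtain b where b: "cng smul (Xv n x ^ k) (Cst b * Xv (n * k) x0)" using Suc by blast
  obtain b' where b': "cng smul (Xv n x) (Cst b' * Xv n x0)" using H by blast
  have "cng smul (Xv n x ^ Suc k) ((Cst b * Xv (n * k) x0) * (Cst b' * Xv n x0))"
    using cng_mult[OF b b'] by (simp add: mult.commute)
  also have "(Cst b * Xv (n * k) x0) * (Cst b' * Xv n x0) = Cst (b * b') * (Xv (n * k) x0 * Xv n x0)"
    by (simp add: Cst_mult[symmetric] mult_ac)
  finally have "cng smul (Xv n x ^ Suc k) (Cst (b * b') * (Cst (of_nat (n * k + n choose (n * k))) * Xv (n * k + n) x0))"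
    by (rule cng_trans[OF _ cng_mult[OF cng_refl cng_MUL]])
  also have "Cst (b * b') * (Cst (of_nat (n * k + n choose (n * k))) * Xv (n * k + n) x0)
     = Cst (b * b' * of_nat (n * k + n choose (n * k))) * Xv (n * Suc k) x0"
    by (simp add: Cst_mult[symmetric] mult.assoc add.commute)
  finally show ?case by blast
qed

lemma MON: "\<exists>b. cng smul (Poly_Mapping.single m 1) (Cst b * Xv (mdeg m) x0)"
proof (induction m rule: update_induct)
  case const
  have "cng smul 1 (Cst 1 * Xv 0 x0)"
    by (rule cng_X0)
  then show ?case by (intro exI[of _ 1]) simp
next
  case (update m v k)
  have upd: "Poly_Mapping.update v k m = m + Poly_Mapping.single v k"
    using update(1) by (intro poly_mapping_eqI) (auto simp: lookup_update lookup_add in_keys_iff lookup_single when_def)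
  obtain b where b: "cng smul (Poly_Mapping.single m 1) (Cst b * Xv (mdeg m) x0)" using update by blast
  obtain b' where b': "cng smul (Xv (fst v) (snd v) ^ k) (Cst b' * Xv (fst v * k) x0)" using POW by blast
  have "Poly_Mapping.single (Poly_Mapping.update v k m) (1::'a) = Poly_Mapping.single m 1 * Xv (fst v) (snd v) ^ k"
    by (simp add: upd single_single_pow[symmetric] mult_single)
  then have "cng smul (Poly_Mapping.single (Poly_Mapping.update v k m) 1) ((Cst b * Xv (mdeg m) x0) * (Cst b' * Xv (fst v * k) x0))"
    using cng_mult[OF b b'] by simp
  also have "(Cst b * Xv (mdeg m) x0) * (Cst b' * Xv (fst v * k) x0) = Cst (b * b') * (Xv (mdeg m) x0 * Xv (fst v * k) x0)"
    by (simp add: Cst_mult[symmetric] mult_ac)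
  finally have "cng smul (Poly_Mapping.single (Poly_Mapping.update v k m) 1)
     (Cst (b * b') * (Cst (of_nat (mdeg m + fst v * k choose mdeg m)) * Xv (mdeg m + fst v * k) x0))"
    by (rule cng_trans[OF _ cng_mult[OF cng_refl cng_MUL]])
  note calc = this
  have md: "mdeg (Poly_Mapping.update v k m) = mdeg m + fst v * k"
    unfolding upd mdeg_add by (cases v) simp
  have "Cst (b * b') * (Cst (of_nat (mdeg m + fst v * k choose mdeg m)) * Xv (mdeg m + fst v * k) x0)
     = Cst (b * b' * of_nat (mdeg m + fst v * k choose mdeg m)) * Xv (mdeg (Poly_Mapping.update v k m)) x0"
    by (simp add: md Cst_mult[symmetric] mult.assoc)
  with calc show ?case by auto
qed

definition beta :: "((nat \<times> 'm) \<Rightarrow>\<^sub>0 nat) \<Rightarrow> 'a" where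
  "beta m = (SOME b. cng smul (Poly_Mapping.single m 1) (Cst b * Xv (mdeg m) x0))"

lemma beta: "cng smul (Poly_Mapping.single m 1) (Cst (beta m) * Xv (mdeg m) x0)"
  unfolding beta_def using MON by (rule someI_ex)

lemma REP: "cng smul p (\<Sum>m\<in>Poly_Mapping.keys p. Cst (Poly_Mapping.lookup p m * beta m) * Xv (mdeg m) x0)"
proof -
  have "p = (\<Sum>m\<in>Poly_Mapping.keys p. Cst (Poly_Mapping.lookup p m) * Poly_Mapping.single m 1)"
    by (subst pm_sum_single) (simp add: single_Cst[symmetric])
  also have "cng smul \<dots> (\<Sum>m\<in>Poly_Mapping.keys p. Cst (Poly_Mapping.lookup p m) * (Cst (beta m) * Xv (mdeg m) x0))"
    by (intro cng_sum cng_mult cng_refl beta)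
  finally show ?thesis by (simp add: mult.assoc[symmetric] Cst_mult)
qed

lemma regroup:
  fixes a :: "'k \<Rightarrow> 'b::comm_ring_1" and d :: "'k \<Rightarrow> nat" and X :: "nat \<Rightarrow> 'c::comm_ring_1" and C :: "'b \<Rightarrow> 'c"
  assumes "finite K" "\<And>m. m \<in> K \<Longrightarrow> d m < N" "\<And>x y. C (x + y) = C x + C y" "C 0 = 0"
  shows "(\<Sum>m\<in>K. C (a m) * X (d m)) = (\<Sum>k<N. C (\<Sum>m\<in>{m\<in>K. d m = k}. a m) * X k)"
proof -
  have Cs: "C (sum f A) = (\<Sum>i\<in>A. C (f i))" for f and A :: "'k set"
    by (induction A rule: infinite_finite_induct) (auto simp: assms)
  have "(\<Sum>k<N. C (\<Sum>m\<in>{m\<in>K. d m = k}. a m) * X k) = (\<Sum>k<N. \<Sum>m\<in>K. if d m = k then C (a m) * X (d m) else 0)"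
    by (simp add: Cs sum_distrib_right sum.inter_filter[symmetric] assms(1))
  also have "\<dots> = (\<Sum>m\<in>K. \<Sum>k<N. if d m = k then C (a m) * X (d m) else 0)"
    by (rule sum.swap)
  also have "\<dots> = (\<Sum>m\<in>K. C (a m) * X (d m))"
    using assms(2) by (simp add: sum.delta)
  finally show ?thesis by simp
qed

lemma REP': "\<exists>c N. cng smul p (\<Sum>k<N. Cst (c k) * Xv k x0)"
proof -
  define N where "N = Suc (Max (mdeg ` Poly_Mapping.keys p))"
  have "\<And>m. m \<in> Poly_Mapping.keys p \<Longrightarrow> mdeg m < N"
    unfolding N_def by (simp add: le_imp_less_Suc)
  then have "(\<Sum>m\<in>Poly_Mapping.keys p. Cst (Poly_Mapping.lookup p m * beta m) * Xv (mdeg m) x0)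
     = (\<Sum>k<N. Cst (\<Sum>m\<in>{m\<in>Poly_Mapping.keys p. mdeg m = k}. Poly_Mapping.lookup p m * beta m) * Xv k x0)"
    by (intro regroup) (auto simp: Cst_add)
  then have "cng smul p (\<Sum>k<N. Cst (\<Sum>m\<in>{m\<in>Poly_Mapping.keys p. mdeg m = k}. Poly_Mapping.lookup p m * beta m) * Xv k x0)"
    using REP[of p] by simp
  then show ?thesis by (intro exI[of _ N] exI[of _ "\<lambda>k. \<Sum>m\<in>{m\<in>Poly_Mapping.keys p. mdeg m = k}. Poly_Mapping.lookup p m * beta m"])
qed

end


lemma gdualD:
  assumes "u \<in> gdual smul"
  shows "u (p + q) = u p + u q" "u (Cst a * p) = a * u p" "p \<in> dp_ideal smul \<Longrightarrow> u p = 0"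
    "\<exists>N. \<forall>n\<ge>N. \<forall>p. homog n p \<longrightarrow> u p = 0"
  using assms by (auto simp: gdual_def)

lemma gdual_0: "u \<in> gdual smul \<Longrightarrow> u 0 = 0"
  using gdualD(1)[of u smul 0 0] by simp
lemma gdual_sum: "u \<in> gdual smul \<Longrightarrow> u (sum f K) = (\<Sum>i\<in>K. u (f i))"
  by (induction K rule: infinite_finite_induct) (auto simp: gdual_0 gdualD(1))
lemma gdual_diff: "u \<in> gdual smul \<Longrightarrow> u (p - q) = u p - u q"
  using gdualD(1)[of u smul "p - q" q] by simp
lemma gdual_cng: "u \<in> gdual smul \<Longrightarrow> cng smul p q \<Longrightarrow> u p = u q"
  using gdual_diff[of u smul p q] gdualD(3)[of u smul "p - q"] by (simp add: cng_def)

context dpctx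
begin

lemma gdual_rep: "u \<in> gdual smul \<Longrightarrow>
   u p = (\<Sum>m\<in>Poly_Mapping.keys p. Poly_Mapping.lookup p m * beta m * u (Xv (mdeg m) x0))"
proof -
  assume u: "u \<in> gdual smul"
  have "u p = u (\<Sum>m\<in>Poly_Mapping.keys p. Cst (Poly_Mapping.lookup p m * beta m) * Xv (mdeg m) x0)"
    by (rule gdual_cng[OF u REP])
  also have "\<dots> = (\<Sum>m\<in>Poly_Mapping.keys p. u (Cst (Poly_Mapping.lookup p m * beta m) * Xv (mdeg m) x0))"
    by (rule gdual_sum[OF u])
  also have "\<dots> = (\<Sum>m\<in>Poly_Mapping.keys p. Poly_Mapping.lookup p m * beta m * u (Xv (mdeg m) x0))"
    by (rule sum.cong[OF refl], rule gdualD(2)[OF u])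
  finally show ?thesis .
qed

lemma gdual_inj:
  assumes "u \<in> gdual smul" "v \<in> gdual smul" "\<And>k. u (Xv k x0) = v (Xv k x0)"
  shows "u = v"
proof (rule ext)
  fix p
  have "u p = (\<Sum>m\<in>Poly_Mapping.keys p. Poly_Mapping.lookup p m * beta m * u (Xv (mdeg m) x0))"
    by (rule gdual_rep[OF assms(1)])
  also have "\<dots> = (\<Sum>m\<in>Poly_Mapping.keys p. Poly_Mapping.lookup p m * beta m * v (Xv (mdeg m) x0))"
    by (simp only: assms(3))
  also have "\<dots> = v p" by (rule gdual_rep[OF assms(2), symmetric])
  finally show "u p = v p" .
qed

lemma gdual_homog0:
  assumes "u \<in> gdual smul" "homog n p" "u (Xv n x0) = 0"
  shows "u p = 0"
proof -
  have "u p = (\<Sum>m\<in>Poly_Mapping.keys p. Poly_Mapping.lookup p m * beta m * u (Xv (mdeg m) x0))"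
    by (rule gdual_rep[OF assms(1)])
  also have "\<dots> = 0"
  proof (rule sum.neutral, rule ballI)
    fix m assume "m \<in> Poly_Mapping.keys p"
    then have "mdeg m = n" using assms(2) by (simp add: homog_def)
    then show "Poly_Mapping.lookup p m * beta m * u (Xv (mdeg m) x0) = 0" using assms(3) by simp
  qed
  finally show ?thesis .
qed

end

lemma homog_Xv: "homog n (Xv n x)"
  by (simp add: homog_def Xv_def)

lemma gdual_Xv_ev: assumes "u \<in> gdual smul" shows "\<exists>N. \<forall>k\<ge>N. u (Xv k x) = 0"
proof -
  obtain N where N: "\<forall>n\<ge>N. \<forall>p. homog n p \<longrightarrow> u p = 0" using gdualD(4)[OF assms] by blast
  show ?thesis by (rule exI[of _ N]) (auto intro: N[rule_format] homog_Xv)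
qed

definition Phi :: "'m \<Rightarrow> (('a::comm_ring_1, 'm) dpoly \<Rightarrow> 'a) \<Rightarrow> 'a poly" where
  "Phi x0 u = Abs_poly (\<lambda>k. u (Xv k x0))"

lemma coeff_Phi:
  assumes "\<exists>N. \<forall>k\<ge>N. u (Xv k x0) = 0" shows "coeff (Phi x0 u) k = u (Xv k x0)"
proof -
  obtain N where N: "\<forall>k\<ge>N. u (Xv k x0) = 0" using assms by blast
  then have "\<forall>k>N. u (Xv k x0) = 0" by simp
  then have "\<forall>\<^sub>\<infinity>k. u (Xv k x0) = 0" unfolding MOST_nat by blast
  then show ?thesis unfolding Phi_def by (subst Abs_poly_inverse) auto
qed

lemma coeff_Phi_gdual: "u \<in> gdual smul \<Longrightarrow> coeff (Phi x0 u) k = u (Xv k x0)"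
  by (rule coeff_Phi) (rule gdual_Xv_ev)

lemma chom_single0: "chom (Poly_Mapping.single 0 :: 'a \<Rightarrow> ('k::comm_monoid_add \<Rightarrow>\<^sub>0 'a::comm_ring_1))"
  by standard (simp_all add: single_add mult_single)

lemma chom_id: "chom (\<lambda>a::'a::comm_ring_1. a)"
  by standard simp_all

lemma tensor_app_add: "tensor_app u v (p + q) = tensor_app u v p + tensor_app u v q"
  unfolding tensor_app_def
  by (rule setsum_keys_plus_distrib) (auto simp: lookup_add algebra_simps)

lemma tensor_app_0: "tensor_app u v 0 = 0"
  by (simp add: tensor_app_def)

lemma tensor_app_sum: "tensor_app u v (sum f K) = (\<Sum>i\<in>K. tensor_app u v (f i))"
  by (induction K rule: infinite_finite_induct) (auto simp: tensor_app_0 tensor_app_add)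

lemma sum_single_set: "(\<Sum>m\<in>{M}. f m) = f M" by simp
lemma prod_single_set: "(\<Prod>m\<in>{M}. f m) = f M" by simp

lemma tensor_app_single:
  "tensor_app u v (Poly_Mapping.single M (1::'a::comm_ring_1)) =
      u (\<Prod>w\<in>{w\<in>Poly_Mapping.keys M. fst w}. Xv (fst (snd w)) (snd (snd w)) ^ Poly_Mapping.lookup M w)
      * v (\<Prod>w\<in>{w\<in>Poly_Mapping.keys M. \<not> fst w}. Xv (fst (snd w)) (snd (snd w)) ^ Poly_Mapping.lookup M w)"
  unfolding tensor_app_def by (simp only: keys_single lookup_single_eq if_False one_neq_zero sum_single_set mult_1)

lemma tensor_app_mon:
  "tensor_app u v (X2 True i x * X2 False j x) = u (Xv i x) * v (Xv j x)"
proof -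
  let ?M = "Poly_Mapping.single (True, i, x) 1 + Poly_Mapping.single (False, j, x) (1::nat)"
  have eq: "X2 True i x * X2 False j x = Poly_Mapping.single ?M 1"
    unfolding X2_def mult_single by simp
  have k: "Poly_Mapping.keys ?M = {(True, i, x), (False, j, x)}"
    by (simp add: keys_add_nat insert_commute)
  have l1: "Poly_Mapping.lookup ?M (True, i, x) = 1" "Poly_Mapping.lookup ?M (False, j, x) = 1"
    by (simp_all add: lookup_add lookup_single)
  have s1: "{w \<in> Poly_Mapping.keys ?M. fst w} = {(True, i, x)}" unfolding k by auto
  have s2: "{w \<in> Poly_Mapping.keys ?M. \<not> fst w} = {(False, j, x)}" unfolding k by auto
  show ?thesis unfolding eq tensor_app_single s1 s2
    by (simp only: prod_single_set l1 power_one_right fst_conv snd_conv)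
qed

lemma comult_Xv: "comult (Xv k x) = (\<Sum>i\<le>k. X2 True i x * X2 False (k - i) x)"
  unfolding comult_def
  by (simp add: peval_Xv)

lemma dprod_Xv: "dprod u v (Xv k x) = (\<Sum>i\<le>k. u (Xv i x) * v (Xv (k - i) x))"
  by (simp add: dprod_def comult_Xv tensor_app_sum tensor_app_mon)

lemma dunit_Xv: "dunit (Xv k x) = (if k = 0 then 1 else 0)"
  by (simp add: dunit_def peval_Xv)


lemma ev_add:
  assumes "\<exists>N. \<forall>k\<ge>N. u (Xv k x0) = (0::'a::comm_ring_1)" "\<exists>N. \<forall>k\<ge>N. v (Xv k x0) = 0"
  shows "\<exists>N. \<forall>k\<ge>N. u (Xv k x0) + v (Xv k x0) = 0"
proof -
  obtain N1 N2 where "\<forall>k\<ge>N1. u (Xv k x0) = 0" "\<forall>k\<ge>N2. v (Xv k x0) = 0" using assms by blast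
  then show ?thesis by (intro exI[of _ "N1 + N2"]) auto
qed

lemma ev_dprod:
  assumes "\<exists>N. \<forall>k\<ge>N. u (Xv k x0) = (0::'a::comm_ring_1)" "\<exists>N. \<forall>k\<ge>N. v (Xv k x0) = 0"
  shows "\<exists>N. \<forall>k\<ge>N. dprod u v (Xv k x0) = 0"
proof -
  obtain N1 N2 where 1: "\<forall>k\<ge>N1. u (Xv k x0) = 0" and 2: "\<forall>k\<ge>N2. v (Xv k x0) = 0" using assms by blast
  have "dprod u v (Xv k x0) = 0" if "k \<ge> N1 + N2" for k
    unfolding dprod_Xv
  proof (rule sum.neutral, rule ballI)
    fix i assume "i \<in> {..k}"
    then have "i \<ge> N1 \<or> k - i \<ge> N2" using that by auto
    then show "u (Xv i x0) * v (Xv (k - i) x0) = 0" using 1 2 by auto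
  qed
  then show ?thesis by blast
qed

lemma ev_smul:
  assumes "\<exists>N. \<forall>k\<ge>N. u (Xv k x0) = (0::'a::comm_ring_1)"
  shows "\<exists>N. \<forall>k\<ge>N. a * u (Xv k x0) = 0"
proof -
  obtain N where "\<forall>k\<ge>N. u (Xv k x0) = 0" using assms by blast
  then show ?thesis by (intro exI[of _ N]) auto
qed

lemma Phi_add: "u \<in> gdual smul \<Longrightarrow> v \<in> gdual smul \<Longrightarrow> Phi x0 (\<lambda>p. u p + v p) = Phi x0 u + Phi x0 v"
  by (rule poly_eqI) (simp add: coeff_Phi_gdual coeff_Phi[OF ev_add[OF gdual_Xv_ev gdual_Xv_ev]])

lemma Phi_smul: "u \<in> gdual smul \<Longrightarrow> Phi x0 (\<lambda>p. a * u p) = smult a (Phi x0 u)"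
  by (rule poly_eqI) (simp add: coeff_Phi_gdual coeff_Phi[OF ev_smul[OF gdual_Xv_ev]])

lemma Phi_dprod: "u \<in> gdual smul \<Longrightarrow> v \<in> gdual smul \<Longrightarrow> Phi x0 (dprod u v) = Phi x0 u * Phi x0 v"
  by (rule poly_eqI) (simp add: coeff_Phi_gdual coeff_Phi[OF ev_dprod[OF gdual_Xv_ev gdual_Xv_ev]]
       coeff_mult dprod_Xv)

context dpctx
begin

lemma dual_iso_generic:
  assumes into: "\<And>u. u \<in> gdual smul \<Longrightarrow> Phi x0 u \<in> S"
    and onto: "\<And>f. f \<in> S \<Longrightarrow> \<exists>u\<in>gdual smul. Phi x0 u = f"
  shows "dual_iso smul (Phi x0) S"
  unfolding dual_iso_def
proof (intro conjI ballI allI)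
  show "bij_betw (Phi x0) (gdual smul) S"
  proof (rule bij_betw_imageI)
    show "inj_on (Phi x0) (gdual smul)"
    proof (rule inj_onI)
      fix u v assume u: "u \<in> gdual smul" and v: "v \<in> gdual smul" and eq: "Phi x0 u = Phi x0 v"
      show "u = v"
      proof (rule gdual_inj[OF u v])
        fix k show "u (Xv k x0) = v (Xv k x0)"
          using arg_cong[OF eq, of "\<lambda>f. coeff f k"] coeff_Phi_gdual[OF u, of x0 k] coeff_Phi_gdual[OF v, of x0 k] by simp
      qed
    qed
    show "Phi x0 ` gdual smul = S" using into onto by blast
  qed
next
  fix u v assume "u \<in> gdual smul" "v \<in> gdual smul"
  then show "Phi x0 (\<lambda>p. u p + v p) = Phi x0 u + Phi x0 v" "Phi x0 (dprod u v) = Phi x0 u * Phi x0 v"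
    by (simp_all add: Phi_add Phi_dprod)
next
  fix a u assume "u \<in> gdual smul"
  then show "Phi x0 (\<lambda>p. a * u p) = smult a (Phi x0 u)" by (simp add: Phi_smul)
next
  fix u n assume u: "u \<in> gdual smul"
  show "dhomog n u = (\<exists>c. Phi x0 u = monom c n)"
  proof
    assume h: "dhomog n u"
    have "Phi x0 u = monom (u (Xv n x0)) n"
    proof (rule poly_eqI)
      fix k show "coeff (Phi x0 u) k = coeff (monom (u (Xv n x0)) n) k"
        using h homog_Xv[of k x0] by (cases "k = n") (auto simp: coeff_Phi_gdual[OF u] coeff_monom dhomog_def)
    qed
    then show "\<exists>c. Phi x0 u = monom c n" by blast
  next
    assume "\<exists>c. Phi x0 u = monom c n"
    then obtain c where c: "Phi x0 u = monom c n" by blast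
    have z: "u (Xv k x0) = 0" if "k \<noteq> n" for k
      using arg_cong[OF c, of "\<lambda>f. coeff f k"] that by (simp add: coeff_Phi_gdual[OF u] coeff_monom)
    show "dhomog n u" unfolding dhomog_def
      using gdual_homog0[OF u _ z] by blast
  qed
qed

end


lemma dn_mult: "Dual a b * Dual c d = Dual (a * c) (a * d + b * c)"
  by (simp add: times_dualnum_def)
lemma dn_add: "Dual a b + Dual c d = Dual (a + c) (b + d)"
  by (simp add: plus_dualnum_def)
lemma dn_diff: "Dual a b - Dual c d = Dual (a - c) (b - d)"
  by (simp add: minus_dualnum_def)
lemma dn_0: "(0::dualnum) = Dual 0 0" by (simp add: zero_dualnum_def)
lemma dn_1: "(1::dualnum) = Dual 1 0" by (simp add: one_dualnum_def)
lemma re_mult[simp]: "re (x * y) = re x * re y" by (simp add: times_dualnum_def)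
lemma re_add[simp]: "re (x + y) = re x + re y" by (simp add: plus_dualnum_def)
lemma re_diff[simp]: "re (x - y) = re x - re y" by (simp add: minus_dualnum_def)
lemma re_0[simp]: "re 0 = 0" by (simp add: zero_dualnum_def)
lemma re_1[simp]: "re 1 = 1" by (simp add: one_dualnum_def)
lemma re_pow[simp]: "re (x ^ n) = re x ^ n" by (induction n) auto
lemma dn_of_nat: "(of_nat n :: dualnum) = Dual (of_nat n) 0"
  by (induction n) (simp_all add: dn_0 dn_1 dn_add)
lemma re_of_nat[simp]: "re (of_nat n) = of_nat n" by (simp add: dn_of_nat)
lemma re_xeps[simp]: "re xeps = 0" by (simp add: xeps_def)

lemma re_zero_iff: "re a = 0 \<longleftrightarrow> (\<exists>c. a = xeps * c)"
proof
  assume "re a = 0" then have "a = xeps * Dual (du a) 0"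
    by (cases a) (simp add: xeps_def dn_mult)
  then show "\<exists>c. a = xeps * c" by blast
qed auto

lemma re_zero_mult: "re a = 0 \<Longrightarrow> re b = 0 \<Longrightarrow> a * b = 0"
  by (cases a, cases b) (simp add: dn_mult dn_0)

lemma xeps_mult_zero: "xeps * a = 0 \<longleftrightarrow> re a = 0"
  by (cases a) (simp add: xeps_def dn_mult dn_0)

definition finv :: "nat \<Rightarrow> dualnum" where
  "finv n = Dual (1 / of_nat (fact n)) 0"

lemma finv_fact: "of_nat (fact n) * finv n = 1"
  by (simp add: finv_def dn_of_nat dn_mult dn_1)

lemma re_finv: "re (finv n) \<noteq> 0"
  by (simp add: finv_def)

lemma finv_mult: "finv m * finv n = of_nat (m + n choose m) * finv (m + n)"
proof -
  have "(of_nat (m + n choose m) :: complex) = fact (m + n) / (fact m * fact n)"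
    by (subst binomial_fact) auto
  then have "1 / (of_nat (fact m) * of_nat (fact n)) = (of_nat (m + n choose m) :: complex) * (1 / of_nat (fact (m + n)))"
    by (simp add: field_simps)
  then show ?thesis by (simp add: finv_def dn_of_nat dn_mult)
qed

section \<open>Evaluation map\<close>

definition phi :: "('m \<Rightarrow> dualnum) \<Rightarrow> (dualnum, 'm) dpoly \<Rightarrow> dualnum poly" where
  "phi E = peval (\<lambda>(n, x). monom (E x ^ n * finv n) n) (\<lambda>a. [:a:])"

lemma chom_pconst: "chom (\<lambda>a::'a::comm_ring_1. [:a:])"
  by standard (simp_all add: one_pCons)

lemma phi_add: "phi E (p + q) = phi E p + phi E q"
  unfolding phi_def by (rule chom.peval_add[OF chom_pconst])
lemma phi_mult: "phi E (p * q) = phi E p * phi E q"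
  unfolding phi_def by (rule chom.peval_mult[OF chom_pconst])
lemma phi_diff: "phi E (p - q) = phi E p - phi E q"
  unfolding phi_def by (rule chom.peval_diff[OF chom_pconst])
lemma phi_0: "phi E 0 = 0"
  unfolding phi_def by (rule chom.peval_0[OF chom_pconst])
lemma phi_1: "phi E 1 = 1"
  unfolding phi_def by (rule chom.peval_1[OF chom_pconst])
lemma phi_Cst: "phi E (Cst a) = [:a:]"
  unfolding phi_def by (rule chom.peval_Cst[OF chom_pconst])
lemma phi_sum: "phi E (sum f K) = (\<Sum>i\<in>K. phi E (f i))"
  unfolding phi_def by (rule chom.peval_sum[OF chom_pconst])
lemma phi_Xv: "phi E (Xv n x) = monom (E x ^ n * finv n) n"
  unfolding phi_def by (simp add: peval_Xv one_pCons)

lemma pconst_monom: "[:a:] * monom b n = monom (a * b) n"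
  by (simp add: monom_0[symmetric] mult_monom)

lemma finv_0: "finv 0 = 1" by (simp add: finv_def dn_1)

lemma phi_rel0: "phi E (Xv 0 x - 1) = 0"
  by (simp add: phi_diff phi_Xv phi_1 finv_0 monom_0 one_pCons)

lemma phi_rel2: "phi E (Xv m x * Xv n x - Cst (of_nat (m + n choose m)) * Xv (m + n) x) = 0"
proof -
  have "E x ^ m * finv m * (E x ^ n * finv n) = of_nat (m + n choose m) * (E x ^ (m + n) * finv (m + n))"
  proof -
    have "E x ^ m * finv m * (E x ^ n * finv n) = E x ^ (m + n) * (finv m * finv n)"
      by (simp only: power_add mult_ac)
    also have "\<dots> = of_nat (m + n choose m) * (E x ^ (m + n) * finv (m + n))"
      by (simp only: finv_mult mult_ac)
    finally show ?thesis .
  qed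
  then show ?thesis
    by (simp only: phi_diff phi_mult phi_Xv phi_Cst mult_monom pconst_monom diff_self)
qed

lemma phi_rel3:
  assumes E: "E (x + y) = E x + E y"
  shows "phi E (Xv n (x + y) - (\<Sum>i\<le>n. Xv i x * Xv (n - i) y)) = 0"
proof -
  have "(\<Sum>i\<le>n. phi E (Xv i x * Xv (n - i) y)) = (\<Sum>i\<le>n. monom (E x ^ i * E y ^ (n - i) * (of_nat (n choose i) * finv n)) n)"
  proof (rule sum.cong[OF refl])
    fix i assume "i \<in> {..n}"
    then have "finv i * finv (n - i) = of_nat (n choose i) * finv n"
      using finv_mult[of i "n - i"] by simp
    then have "E x ^ i * finv i * (E y ^ (n - i) * finv (n - i)) = E x ^ i * E y ^ (n - i) * (of_nat (n choose i) * finv n)"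
      by (metis mult.assoc mult.left_commute)
    moreover have "i + (n - i) = n" using \<open>i \<in> {..n}\<close> by simp
    ultimately show "phi E (Xv i x * Xv (n - i) y) = monom (E x ^ i * E y ^ (n - i) * (of_nat (n choose i) * finv n)) n"
      by (simp only: phi_mult phi_Xv mult_monom)
  qed
  also have "\<dots> = monom ((E x + E y) ^ n * finv n) n"
    by (simp add: monom_sum[symmetric] binomial_ring sum_distrib_left sum_distrib_right mult_ac)
  finally show ?thesis by (simp add: phi_diff phi_sum phi_Xv E)
qed

lemma mon_monom_deg:
  "\<exists>c. mon (\<lambda>(n, x). monom (E x ^ n * finv n) n) m = monom c (mdeg m)"
proof (induction m rule: update_induct)
  case const then show ?case by (auto intro: exI[of _ 1] simp: monom_0 one_pCons)
next
  case (update m v k)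
  have upd: "Poly_Mapping.update v k m = m + Poly_Mapping.single v k"
    using update(1) by (intro poly_mapping_eqI) (auto simp: lookup_update lookup_add in_keys_iff lookup_single when_def)
  obtain c where c: "mon (\<lambda>(n, x). monom (E x ^ n * finv n) n) m = monom c (mdeg m)" using update by blast
  have m1: "mon (\<lambda>(n, x). monom (E x ^ n * finv n) n) (Poly_Mapping.update v k m)
     = monom c (mdeg m) * mon (\<lambda>(n, x). monom (E x ^ n * finv n) n) (Poly_Mapping.single v k)"
    by (simp only: upd mon_add c)
  have m2: "mdeg (Poly_Mapping.update v k m) = mdeg m + fst v * k"
    unfolding upd mdeg_add by (cases v) simp
  obtain n x where v: "v = (n, x)" by (cases v)
  show ?case unfolding m1 m2 unfolding v
    by (simp add: monom_power mult_monom)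
qed

lemma phi_homog:
  assumes "homog n p" shows "\<exists>c. phi E p = monom c n"
proof -
  let ?f = "\<lambda>(n, x). monom (E x ^ n * finv n) n"
  define c where "c m = (SOME c. mon ?f m = monom c (mdeg m))" for m
  have c: "mon ?f m = monom (c m) (mdeg m)" for m
    unfolding c_def using mon_monom_deg[of E m] by (rule someI_ex)
  have "phi E p = (\<Sum>m\<in>Poly_Mapping.keys p. [:Poly_Mapping.lookup p m:] * mon ?f m)"
    unfolding phi_def peval_alt ..
  also have "\<dots> = (\<Sum>m\<in>Poly_Mapping.keys p. monom (Poly_Mapping.lookup p m * c m) n)"
    using assms unfolding homog_def by (intro sum.cong[OF refl]) (simp add: c smult_monom)
  also have "\<dots> = monom (\<Sum>m\<in>Poly_Mapping.keys p. Poly_Mapping.lookup p m * c m) n"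
    by (simp add: monom_sum)
  finally show ?thesis by blast
qed

definition Lf :: "dualnum poly \<Rightarrow> dualnum poly \<Rightarrow> dualnum" where
  "Lf f h = (\<Sum>k\<le>degree f. coeff h k * of_nat (fact k) * coeff f k)"

definition uf :: "('m \<Rightarrow> dualnum) \<Rightarrow> dualnum poly \<Rightarrow> (dualnum, 'm) dpoly \<Rightarrow> dualnum" where
  "uf E f p = Lf f (phi E p)"

lemma uf_add: "uf E f (p + q) = uf E f p + uf E f q"
  by (simp add: uf_def Lf_def phi_add sum.distrib algebra_simps)

lemma uf_Cst: "uf E f (Cst a * p) = a * uf E f p"
  by (simp add: uf_def Lf_def phi_mult phi_Cst sum_distrib_left mult_ac)

lemma uf_homog: "homog n p \<Longrightarrow> n > degree f \<Longrightarrow> uf E f p = 0"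
  using phi_homog[of n p E] by (auto simp: uf_def Lf_def coeff_monom intro!: sum.neutral)

lemma uf_Xv: "E x0 = 1 \<Longrightarrow> uf E f (Xv k x0) = coeff f k"
proof -
  assume E: "E x0 = 1"
  have "uf E f (Xv k x0) = (\<Sum>j\<le>degree f. (if j = k then finv k * of_nat (fact k) * coeff f k else 0))"
    unfolding uf_def Lf_def phi_Xv E by (intro sum.cong[OF refl]) (simp add: coeff_monom)
  also have "\<dots> = coeff f k"
    using finv_fact[of k] by (cases "k \<le> degree f") (auto simp: mult_ac coeff_eq_0)
  finally show ?thesis .
qed

lemma uf_gdual:
  fixes smul :: "dualnum \<Rightarrow> 'm::ab_group_add \<Rightarrow> 'm" and E :: "'m \<Rightarrow> dualnum"
  assumes "\<And>p. p \<in> dp_ideal smul \<Longrightarrow> Lf f (phi E p) = 0"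
  shows "uf E f \<in> gdual smul"
  unfolding gdual_def
proof (intro CollectI conjI allI ballI impI exI[of _ "Suc (degree f)"])
  fix p q :: "(dualnum, 'm) dpoly" show "uf E f (p + q) = uf E f p + uf E f q" by (rule uf_add)
next
  fix a and p :: "(dualnum, 'm) dpoly" show "uf E f (Cst a * p) = a * uf E f p" by (rule uf_Cst)
next
  fix p :: "(dualnum, 'm) dpoly" assume "p \<in> dp_ideal smul" then show "uf E f p = 0" using assms by (simp add: uf_def)
next
  fix n and p :: "(dualnum, 'm) dpoly" assume "Suc (degree f) \<le> n" "homog n p" then show "uf E f p = 0" by (intro uf_homog) auto
qed


lemma gen_ideal_zero: "gen_ideal {0::'a::comm_ring_1} = {0}"
  by (auto simp: gen_ideal_def intro: exI[of _ 0])

lemma phi_ideal: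
  assumes "\<And>s. s \<in> dp_rels smul \<Longrightarrow> phi E s \<in> gen_ideal T"
  shows "p \<in> dp_ideal smul \<Longrightarrow> phi E p \<in> gen_ideal T"
  unfolding dp_ideal_def
  by (rule gen_ideal_image[where h = "phi E"]) (auto simp: phi_add phi_mult phi_0 assms)

lemma dp_relsE:
  assumes "s \<in> dp_rels smul"
  obtains x where "s = Xv 0 x - 1"
  | n f x where "s = Xv n (smul f x) - Cst (f ^ n) * Xv n x"
  | m n x where "s = Xv m x * Xv n x - Cst (of_nat (m + n choose m)) * Xv (m + n) x"
  | n x y where "s = Xv n (x + y) - (\<Sum>i\<le>n. Xv i x * Xv (n - i) y)"
  using assms unfolding dp_rels_def by blast

section \<open>Gamma(A)\<close>

interpretation GA: dpctx "(*) :: dualnum \<Rightarrow> dualnum \<Rightarrow> dualnum" "1 :: dualnum"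
proof
  fix n and x :: dualnum
  show "\<exists>b. cng (*) (Xv n x) (Cst b * Xv n (1::dualnum))"
    using rel1[where smul="(*)" and n=n and f=x and x="1::dualnum"] by (auto simp: cng_def)
qed

lemma phiA_rel:
  assumes "s \<in> dp_rels ((*) :: dualnum \<Rightarrow> dualnum \<Rightarrow> dualnum)" shows "phi (\<lambda>x. x) s = 0"
  using assms
proof (cases rule: dp_relsE)
  case (1 x) then show ?thesis by (simp add: phi_rel0)
next
  case (2 n f x) then show ?thesis
    by (simp add: phi_diff phi_mult phi_Xv phi_Cst smult_monom power_mult_distrib mult_ac)
next
  case (3 m n x) then show ?thesis by (simp add: phi_rel2)
next
  case (4 n x y) then show ?thesis by (simp add: phi_rel3)
qed

lemma phiA_ideal: "p \<in> dp_ideal ((*) :: dualnum \<Rightarrow> dualnum \<Rightarrow> dualnum) \<Longrightarrow> phi (\<lambda>x. x) p = 0"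
  using phi_ideal[of "(*)" "\<lambda>x. x" "{0}" p] phiA_rel by (simp add: gen_ideal_zero gen_ideal_0)

lemma Lf_0: "Lf f 0 = 0" by (simp add: Lf_def)

theorem GammaA_dual: "\<exists>\<Psi>. dual_iso ((*) :: dualnum \<Rightarrow> dualnum \<Rightarrow> dualnum) \<Psi> UNIV"
proof (rule exI, rule GA.dual_iso_generic)
  fix u show "Phi 1 u \<in> UNIV" by simp
next
  fix f :: "dualnum poly" assume "f \<in> UNIV"
  have u: "uf (\<lambda>x. x) f \<in> gdual ((*) :: dualnum \<Rightarrow> dualnum \<Rightarrow> dualnum)"
    by (rule uf_gdual) (simp add: phiA_ideal Lf_0)
  have "Phi 1 (uf (\<lambda>x. x) f) = f"
    by (rule poly_eqI) (simp add: coeff_Phi_gdual[OF u] uf_Xv)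
  then show "\<exists>u\<in>gdual ((*) :: dualnum \<Rightarrow> dualnum \<Rightarrow> dualnum). Phi 1 u = f" using u by blast
qed


section \<open>The module M\<close>

definition x0M :: modx where "x0M = abs_modx 1"
definition EM :: "modx \<Rightarrow> dualnum" where "EM m = Dual (re (rep_modx m)) 0"

lemma modrel_refl: "modrel a a" by (simp add: modrel_iff)

lemma abs_modx_eq: "abs_modx a = abs_modx b \<longleftrightarrow> re a = re b"
  using Quotient3_rel[OF Quotient3_modx, of a b] by (simp add: modrel_iff)

lemma EM_abs: "EM (abs_modx a) = Dual (re a) 0"
proof -
  have "modrel (rep_modx (abs_modx a)) a"
    by (rule Quotient3_rep_abs[OF Quotient3_modx modrel_refl])
  then show ?thesis by (simp add: EM_def modrel_iff)
qed

lemma EM_add: "EM (x + y) = EM x + EM y"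
  by (induction x rule: modx.abs_induct, induction y rule: modx.abs_induct)
     (simp add: plus_modx.abs_eq EM_abs dn_add)

lemma EM_smul: "EM (modx_smul f x) = Dual (re f) 0 * EM x"
  by (induction x rule: modx.abs_induct) (simp add: modx_smul.abs_eq EM_abs dn_mult)

lemma EM_x0: "EM x0M = 1"
  by (simp add: x0M_def EM_abs dn_1)

lemma smul_x0: "modx_smul a x0M = abs_modx a"
  by (simp add: x0M_def modx_smul.abs_eq)

lemma smul_xeps_x0: "modx_smul xeps x0M = 0"
  by (simp add: smul_x0 zero_modx.abs_eq abs_modx_eq)

lemma smul_0_x0: "modx_smul 0 x0M = 0"
  by (simp add: smul_x0 zero_modx.abs_eq)

interpretation GM: dpctx modx_smul x0M
proof
  fix n and m :: modx
  obtain a where m: "m = modx_smul a x0M"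
    by (induction m rule: modx.abs_induct) (auto simp: smul_x0)
  show "\<exists>b. cng modx_smul (Xv n m) (Cst b * Xv n x0M)"
    using rel1[where smul=modx_smul and n=n and f=a and x=x0M] by (auto simp: cng_def m)
qed

section \<open>The ideal J\<close>

definition Jc :: "dualnum poly set" where
  "Jc = {h. coeff h 0 = 0 \<and> (\<forall>k. re (coeff h k) = 0)}"

lemma re_sum: "re (sum f K) = (\<Sum>i\<in>K. re (f i))"
  by (induction K rule: infinite_finite_induct) auto

lemma gen_ideal_induct:
  assumes "h \<in> gen_ideal S" "P 0" "\<And>a b. P a \<Longrightarrow> P b \<Longrightarrow> P (a + b)" "\<And>r s. s \<in> S \<Longrightarrow> P (r * s)"
  shows "P h"
proof -
  obtain k :: nat and r s where h: "h = (\<Sum>i<k. r i * s i)" "\<forall>i<k. s i \<in> S"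
    using assms(1) by (auto simp: gen_ideal_def)
  have "P (\<Sum>i<j. r i * s i)" if "j \<le> k" for j
    using that by (induction j) (auto intro!: assms(3,4) simp: assms(2) h(2))
  then show ?thesis using h by simp
qed

lemma J_Jc: "h \<in> gen_ideal {monom xeps 1} \<Longrightarrow> h \<in> Jc"
proof (erule gen_ideal_induct)
  show "0 \<in> Jc" by (simp add: Jc_def)
next
  fix a b assume "a \<in> Jc" "b \<in> Jc" then show "a + b \<in> Jc" by (simp add: Jc_def)
next
  fix r s :: "dualnum poly" assume "s \<in> {monom xeps 1}"
  then show "r * s \<in> Jc" by (simp add: Jc_def mult.commute[of r] coeff_monom_mult)
qed

lemma Jc_J: assumes "h \<in> Jc" shows "h \<in> gen_ideal {monom xeps 1}"
proof -
  have h0: "coeff h 0 = 0" and hr: "\<And>k. re (coeff h k) = 0" using assms by (auto simp: Jc_def)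
  have t: "monom (coeff h i) i \<in> gen_ideal {monom xeps 1}" for i
  proof (cases i)
    case 0 then show ?thesis using h0 by (simp add: gen_ideal_0)
  next
    case (Suc j)
    obtain c where c: "coeff h i = xeps * c" using hr[of i] re_zero_iff by blast
    have "monom (coeff h i) i = monom (c * xeps) (j + 1)"
      using c Suc by (simp add: mult.commute)
    also have "\<dots> = monom c j * monom xeps 1" by (simp add: mult_monom)
    finally have "monom (coeff h i) i = monom c j * monom xeps 1" .
    then show ?thesis by (simp add: gen_ideal_mult gen_ideal_gen)
  qed
  have "h = (\<Sum>i\<le>degree h. monom (coeff h i) i)" by (simp add: poly_as_sum_of_monoms)
  also have "\<dots> \<in> gen_ideal {monom xeps 1}" by (rule gen_ideal_sum) (rule t)
  finally show ?thesis .
qed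

lemma J_iff: "h \<in> gen_ideal {monom xeps 1} \<longleftrightarrow> h \<in> Jc"
  using J_Jc Jc_J by blast

lemma Xv1_0: "Xv 1 (0::modx) \<in> dp_ideal modx_smul"
  using rel1[where smul=modx_smul and n=1 and f=0 and x=x0M] by (simp add: smul_0_x0)

lemma KX1: "Cst xeps * Xv 1 x0M \<in> dp_ideal modx_smul"
proof -
  have "Xv 1 (0::modx) - Cst xeps * Xv 1 x0M \<in> dp_ideal modx_smul"
    using rel1[where smul=modx_smul and n=1 and f=xeps and x=x0M] by (simp add: smul_xeps_x0)
  then have "Xv 1 (0::modx) - (Xv 1 0 - Cst xeps * Xv 1 x0M) \<in> dp_ideal modx_smul"
    using Xv1_0 by (rule I_diff[rotated])
  then show ?thesis by simp
qed

definition kinv :: "nat \<Rightarrow> dualnum" where "kinv k = Dual (1 / of_nat k) 0"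

lemma kinv: "k \<noteq> 0 \<Longrightarrow> kinv k * of_nat k = 1"
  by (simp add: kinv_def dn_of_nat dn_mult dn_1)

lemma KX: assumes "k \<ge> 1" shows "Cst xeps * Xv k x0M \<in> dp_ideal modx_smul"
proof -
  have r: "Xv 1 x0M * Xv (k - 1) x0M - Cst (of_nat k) * Xv k x0M \<in> dp_ideal modx_smul"
    using rel2[where smul=modx_smul and m=1 and n="k - 1" and x=x0M] assms by simp
  have a: "Cst xeps * Xv 1 x0M * Xv (k - 1) x0M \<in> dp_ideal modx_smul"
    using KX1 by (rule I_mult2)
  have "Cst xeps * (Xv 1 x0M * Xv (k - 1) x0M - Cst (of_nat k) * Xv k x0M) \<in> dp_ideal modx_smul"
    using r by (rule I_mult)
  then have "Cst xeps * Xv 1 x0M * Xv (k - 1) x0M - (Cst xeps * (Xv 1 x0M * Xv (k - 1) x0M - Cst (of_nat k) * Xv k x0M))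
     \<in> dp_ideal modx_smul"
    using a by (rule I_diff[rotated])
  then have "Cst (of_nat k) * (Cst xeps * Xv k x0M) \<in> dp_ideal modx_smul"
    by (simp add: algebra_simps)
  then have "Cst (kinv k) * (Cst (of_nat k) * (Cst xeps * Xv k x0M)) \<in> dp_ideal modx_smul"
    by (rule I_mult)
  then show ?thesis using kinv[of k] assms by (simp add: mult.assoc[symmetric] Cst_mult)
qed


lemma Jc_0: "0 \<in> Jc" by (simp add: Jc_def)

lemma phiM_rel:
  assumes "s \<in> dp_rels modx_smul" shows "phi EM s \<in> Jc"
  using assms
proof (cases rule: dp_relsE)
  case (1 x) then show ?thesis by (simp add: phi_rel0 Jc_0)
next
  case (2 n f x)
  let ?c = "(Dual (re f) 0 * EM x) ^ n * finv n - f ^ n * (EM x ^ n * finv n)"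
  have e: "phi EM s = monom ?c n"
    by (rule poly_eqI) (simp add: 2 phi_diff phi_mult phi_Xv phi_Cst EM_smul coeff_monom)
  have "re ?c = 0" by (simp add: power_mult_distrib)
  moreover have "n = 0 \<Longrightarrow> ?c = 0" by simp
  ultimately show ?thesis unfolding e Jc_def by (auto simp: coeff_monom)
next
  case (3 m n x) then show ?thesis by (simp add: phi_rel2 Jc_0)
next
  case (4 n x y) then show ?thesis by (simp add: phi_rel3 EM_add Jc_0)
qed

lemma phiM_ideal: "p \<in> dp_ideal modx_smul \<Longrightarrow> phi EM p \<in> gen_ideal {monom xeps 1}"
  by (rule phi_ideal, rule Jc_J, rule phiM_rel)

lemma phi_rep:
  "phi EM (\<Sum>k<N. Cst (c k) * Xv k x0M) = (\<Sum>k<N. monom (c k * finv k) k)"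
  by (simp add: phi_sum phi_mult phi_Cst phi_Xv EM_x0 smult_monom)

theorem GammaM_quot: "\<exists>\<phi>. gamma_quot_iso modx_smul \<phi> (gen_ideal {monom xeps 1})"
proof (rule exI[of _ "phi EM"], unfold gamma_quot_iso_def, intro conjI allI)
  fix p q show "phi EM (p + q) = phi EM p + phi EM q" by (rule phi_add)
  show "phi EM (p * q) = phi EM p * phi EM q" by (rule phi_mult)
next
  fix a show "phi EM (Cst a) = [:a:]" by (rule phi_Cst)
next
  fix p :: "(dualnum, modx) dpoly"
  show "(phi EM p \<in> gen_ideal {monom xeps 1}) = (p \<in> dp_ideal modx_smul)"
  proof
    assume P: "phi EM p \<in> gen_ideal {monom xeps 1}"
    obtain c N where cn: "cng modx_smul p (\<Sum>k<N. Cst (c k) * Xv k x0M)" using GM.REP' by blast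
    have "phi EM (p - (\<Sum>k<N. Cst (c k) * Xv k x0M)) \<in> gen_ideal {monom xeps 1}"
      using cn unfolding cng_def by (rule phiM_ideal)
    then have X: "phi EM p - phi EM (\<Sum>k<N. Cst (c k) * Xv k x0M) \<in> gen_ideal {monom xeps 1}"
      by (simp only: phi_diff)
    have "phi EM p - (phi EM p - phi EM (\<Sum>k<N. Cst (c k) * Xv k x0M)) \<in> gen_ideal {monom xeps 1}"
      by (rule gen_ideal_diff[OF P X])
    moreover have "phi EM p - (phi EM p - phi EM (\<Sum>k<N. Cst (c k) * Xv k x0M)) = phi EM (\<Sum>k<N. Cst (c k) * Xv k x0M)"
      by simp
    ultimately have "phi EM (\<Sum>k<N. Cst (c k) * Xv k x0M) \<in> gen_ideal {monom xeps 1}" by (simp only:)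
    then have "phi EM (\<Sum>k<N. Cst (c k) * Xv k x0M) \<in> Jc" by (rule J_Jc)
    then have "(\<Sum>k<N. monom (c k * finv k) k) \<in> Jc" by (simp only: phi_rep)
    then have Jr: "coeff (\<Sum>k<N. monom (c k * finv k) k) 0 = 0"
       "\<And>j. re (coeff (\<Sum>k<N. monom (c k * finv k) k) j) = 0"
      by (auto simp: Jc_def)
    have co: "coeff (\<Sum>k<N. monom (c k * finv k) k) j = (if j < N then c j * finv j else 0)" for j
      by (simp add: coeff_sum coeff_monom)
    have c0: "0 < N \<Longrightarrow> c 0 = 0" using Jr(1) by (simp add: co finv_0)
    have cr: "j < N \<Longrightarrow> re (c j) = 0" for j using Jr(2)[of j] re_finv[of j] by (simp add: co)
    have "(\<Sum>k<N. Cst (c k) * Xv k x0M) \<in> dp_ideal modx_smul"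
    proof (rule I_sum)
      fix k assume k: "k \<in> {..<N}"
      show "Cst (c k) * Xv k x0M \<in> dp_ideal modx_smul"
      proof (cases "k = 0")
        case True then show ?thesis using c0 k by (simp add: I_0)
      next
        case False
        obtain d where d: "c k = xeps * d" using cr[of k] k re_zero_iff by auto
        have "Cst d * (Cst xeps * Xv k x0M) \<in> dp_ideal modx_smul"
          using KX[of k] False by (intro I_mult[of _ modx_smul "Cst d"]) simp
        then show ?thesis by (simp add: d Cst_mult[symmetric] mult_ac)
      qed
    qed
    then show "p \<in> dp_ideal modx_smul" using cng_I[OF cn] by blast
  next
    assume "p \<in> dp_ideal modx_smul" then show "phi EM p \<in> gen_ideal {monom xeps 1}" by (rule phiM_ideal)
  qed
next
  fix q :: "dualnum poly"
  let ?p = "(\<Sum>k<Suc (degree q). Cst (coeff q k * of_nat (fact k)) * Xv k x0M) :: (dualnum, modx) dpoly"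
  have "phi EM ?p = (\<Sum>k<Suc (degree q). monom (coeff q k * of_nat (fact k) * finv k) k)"
    by (rule phi_rep)
  also have "\<dots> = (\<Sum>k\<le>degree q. monom (coeff q k) k)"
    using finv_fact by (simp add: lessThan_Suc_atMost mult.assoc)
  also have "\<dots> = q" by (rule poly_as_sum_of_monoms)
  finally show "\<exists>p. phi EM p - q \<in> gen_ideal {monom xeps 1}"
    by (intro exI[of _ ?p]) (simp add: gen_ideal_0)
next
  fix n and p :: "(dualnum, modx) dpoly"
  show "homog n p \<longrightarrow> (\<exists>c. phi EM p - monom c n \<in> gen_ideal {monom xeps 1})"
  proof
    assume "homog n p"
    then obtain c where "phi EM p = monom c n" using phi_homog[of n p EM] by blast
    then have "phi EM p - monom c n = 0" by simp
    then show "\<exists>c. phi EM p - monom c n \<in> gen_ideal {monom xeps 1}"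
      using gen_ideal_0 by metis
  qed
qed


definition Sc :: "dualnum poly set" where
  "Sc = {f. \<forall>k\<ge>1. re (coeff f k) = 0}"

lemma palg_Sc: "f \<in> palg {monom xeps k | k. k \<ge> 1} \<Longrightarrow> f \<in> Sc"
proof (induction rule: palg.induct)
  case (const a) then show ?case by (simp add: Sc_def coeff_pCons split: nat.split)
next
  case (gen g) then show ?case by (auto simp: Sc_def coeff_monom)
next
  case (add f g) then show ?case by (simp add: Sc_def)
next
  case (mult f g)
  show ?case unfolding Sc_def
  proof (intro CollectI allI impI)
    fix k :: nat assume k: "k \<ge> 1"
    have "re (coeff (f * g) k) = (\<Sum>i\<le>k. re (coeff f i) * re (coeff g (k - i)))"
      by (simp add: coeff_mult re_sum)
    also have "\<dots> = 0"
    proof (rule sum.neutral, rule ballI)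
      fix i assume "i \<in> {..k}"
      then have "i \<ge> 1 \<or> k - i \<ge> 1" using k by auto
      then show "re (coeff f i) * re (coeff g (k - i)) = 0" using mult.IH by (auto simp: Sc_def)
    qed
    finally show "re (coeff (f * g) k) = 0" .
  qed
qed

lemma palg_sum: "(\<And>i. i \<in> K \<Longrightarrow> f i \<in> palg G) \<Longrightarrow> sum f K \<in> palg G"
proof (induction K rule: infinite_finite_induct)
  case (infinite K) then show ?case using palg.const[of 0 G] by simp
next
  case empty then show ?case using palg.const[of 0 G] by simp
next
  case (insert x F) then show ?case by (simp add: palg.add)
qed

lemma Sc_palg: assumes "f \<in> Sc" shows "f \<in> palg {monom xeps k | k. k \<ge> 1}"
proof -
  have t: "monom (coeff f i) i \<in> palg {monom xeps k | k. k \<ge> 1}" for i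
  proof (cases "i = 0")
    case True then show ?thesis by (simp add: monom_0 palg.const)
  next
    case False
    have "re (coeff f i) = 0" using assms False by (simp add: Sc_def)
    then obtain d where d: "coeff f i = xeps * d" using re_zero_iff by blast
    have "monom (coeff f i) i = [:d:] * monom xeps i" by (simp add: d smult_monom mult.commute)
    moreover have "monom xeps i \<in> palg {monom xeps k | k. k \<ge> 1}" using False by (intro palg.gen) auto
    ultimately show ?thesis using palg.mult[OF palg.const[of d] \<open>monom xeps i \<in> _\<close>] by simp
  qed
  have "f = (\<Sum>i\<le>degree f. monom (coeff f i) i)" by (simp add: poly_as_sum_of_monoms)
  also have "\<dots> \<in> palg {monom xeps k | k. k \<ge> 1}" by (rule palg_sum) (rule t)
  finally show ?thesis .
qed

lemma gdualM_re: assumes "u \<in> gdual modx_smul" "k \<ge> 1" shows "re (u (Xv k x0M)) = 0"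
proof -
  have "u (Cst xeps * Xv k x0M) = 0" using gdualD(3)[OF assms(1) KX[OF assms(2)]] .
  then have "xeps * u (Xv k x0M) = 0" using gdualD(2)[OF assms(1)] by simp
  then show ?thesis by (simp add: xeps_mult_zero)
qed

lemma ufM_gdual: assumes "f \<in> Sc" shows "uf EM f \<in> gdual modx_smul"
proof (rule uf_gdual)
  fix p :: "(dualnum, modx) dpoly" assume "p \<in> dp_ideal modx_smul"
  then have "phi EM p \<in> Jc" using phiM_ideal J_Jc by blast
  then have h0: "coeff (phi EM p) 0 = 0" and hr: "\<And>k. re (coeff (phi EM p) k) = 0" by (auto simp: Jc_def)
  show "Lf f (phi EM p) = 0" unfolding Lf_def
  proof (rule sum.neutral, rule ballI)
    fix k assume "k \<in> {..degree f}"
    show "coeff (phi EM p) k * of_nat (fact k) * coeff f k = 0"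
    proof (cases "k = 0")
      case True then show ?thesis using h0 by simp
    next
      case False
      then have "re (coeff f k) = 0" using assms by (auto simp: Sc_def)
      then show ?thesis using hr[of k] by (intro re_zero_mult) simp_all
    qed
  qed
qed

lemma Phi_ufM: "f \<in> Sc \<Longrightarrow> Phi x0M (uf EM f) = f"
  by (rule poly_eqI) (simp add: coeff_Phi_gdual[OF ufM_gdual] uf_Xv EM_x0)

theorem GammaM_dual: "\<exists>\<Phi>. dual_iso modx_smul \<Phi> (palg {monom xeps k | k. k \<ge> 1})"
proof (rule exI, rule GM.dual_iso_generic)
  fix u assume u: "u \<in> gdual modx_smul"
  have "Phi x0M u \<in> Sc" unfolding Sc_def
    using gdualM_re[OF u] by (simp add: coeff_Phi_gdual[OF u])
  then show "Phi x0M u \<in> palg {monom xeps k | k. k \<ge> 1}" by (rule Sc_palg)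
next
  fix f assume "f \<in> palg {monom xeps k | k. k \<ge> 1}"
  then have f: "f \<in> Sc" by (rule palg_Sc)
  show "\<exists>u\<in>gdual modx_smul. Phi x0M u = f"
    using ufM_gdual[OF f] Phi_ufM[OF f] by blast
qed

section \<open>Non-generation\<close>

definition Pd :: "nat \<Rightarrow> ((dualnum, modx) dpoly \<Rightarrow> dualnum) \<Rightarrow> bool" where
  "Pd D u \<longleftrightarrow> (\<forall>k>D. u (Xv k x0M) = 0) \<and> (\<forall>k\<ge>1. re (u (Xv k x0M)) = 0)"

lemma dsubalg_Pd:
  assumes "u \<in> dsubalg G" "\<And>g. g \<in> G \<Longrightarrow> Pd D g"
  shows "Pd D u"
  using assms(1)
proof (induction rule: dsubalg.induct)
  case (unit a) then show ?case by (simp add: Pd_def dunit_Xv)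
next
  case (gen u) then show ?case by (rule assms(2))
next
  case (add u v) then show ?case by (simp add: Pd_def)
next
  case (smul u a) then show ?case by (simp add: Pd_def)
next
  case (mult u v)
  have U: "\<And>k. k > D \<Longrightarrow> u (Xv k x0M) = 0" "\<And>k. k \<ge> 1 \<Longrightarrow> re (u (Xv k x0M)) = 0"
    using mult.IH(1) by (auto simp: Pd_def)
  have V: "\<And>k. k > D \<Longrightarrow> v (Xv k x0M) = 0" "\<And>k. k \<ge> 1 \<Longrightarrow> re (v (Xv k x0M)) = 0"
    using mult.IH(2) by (auto simp: Pd_def)
  have A: "dprod u v (Xv k x0M) = 0" if k: "k > D" for k
    unfolding dprod_Xv
  proof (rule sum.neutral, rule ballI)
    fix i assume i: "i \<in> {..k}"
    show "u (Xv i x0M) * v (Xv (k - i) x0M) = 0"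
    proof (cases "i = 0")
      case True then show ?thesis using V(1)[of k] k by simp
    next
      case False
      show ?thesis
      proof (cases "i = k")
        case True then show ?thesis using U(1)[of k] k by simp
      next
        case False
        then show ?thesis using \<open>i \<noteq> 0\<close> i by (intro re_zero_mult U(2) V(2)) auto
      qed
    qed
  qed
  have B: "re (dprod u v (Xv k x0M)) = 0" if k: "k \<ge> 1" for k
    unfolding dprod_Xv re_sum
  proof (rule sum.neutral, rule ballI)
    fix i assume i: "i \<in> {..k}"
    then have "i \<ge> 1 \<or> k - i \<ge> 1" using k by auto
    then show "re (u (Xv i x0M) * v (Xv (k - i) x0M)) = 0" using U(2) V(2) by auto
  qed
  show ?case using A B by (simp add: Pd_def)
qed

lemma witness:
  "uf EM (monom xeps (Suc D)) \<in> gdual modx_smul \<and> \<not> Pd D (uf EM (monom xeps (Suc D)))"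
proof
  have f: "monom xeps (Suc D) \<in> Sc" by (simp add: Sc_def coeff_monom)
  show "uf EM (monom xeps (Suc D)) \<in> gdual modx_smul" by (rule ufM_gdual[OF f])
  have "uf EM (monom xeps (Suc D)) (Xv (Suc D) x0M) = xeps" by (simp add: uf_Xv EM_x0)
  moreover have "xeps \<noteq> 0" by (simp add: xeps_def dn_0)
  ultimately show "\<not> Pd D (uf EM (monom xeps (Suc D)))" unfolding Pd_def by force
qed

theorem not_deg1:
  "dsubalg {u \<in> gdual modx_smul. dhomog 1 u} \<noteq> gdual modx_smul"
proof
  assume eq: "dsubalg {u \<in> gdual modx_smul. dhomog 1 u} = gdual modx_smul"
  have "Pd 1 g" if "g \<in> {u \<in> gdual modx_smul. dhomog 1 u}" for g
  proof -
    have g: "g \<in> gdual modx_smul" "dhomog 1 g" using that by auto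
    show ?thesis unfolding Pd_def
    proof (intro conjI allI impI)
      fix k :: nat assume "k > 1"
      then have "k \<noteq> 1" by simp
      then show "g (Xv k x0M) = 0" using g(2) homog_Xv[of k x0M] unfolding dhomog_def by blast
    next
      fix k :: nat assume "k \<ge> 1" then show "re (g (Xv k x0M)) = 0" by (rule gdualM_re[OF g(1)])
    qed
  qed
  then have "\<And>u. u \<in> gdual modx_smul \<Longrightarrow> Pd 1 u" using dsubalg_Pd eq by blast
  then show False using witness[of 1] by blast
qed

theorem not_fg:
  "\<not> (\<exists>G. G \<subseteq> gdual modx_smul \<and> finite G \<and> dsubalg G = gdual modx_smul)"
proof
  assume "\<exists>G. G \<subseteq> gdual modx_smul \<and> finite G \<and> dsubalg G = gdual modx_smul"
  then obtain G where G: "G \<subseteq> gdual modx_smul" "finite G" "dsubalg G = gdual modx_smul" by blast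
  define Nf where "Nf g = (SOME N. \<forall>k\<ge>N. g (Xv k x0M) = 0)" for g :: "(dualnum, modx) dpoly \<Rightarrow> dualnum"
  have Nf: "\<forall>k\<ge>Nf g. g (Xv k x0M) = 0" if "g \<in> G" for g
  proof -
    have "g \<in> gdual modx_smul" using that G(1) by blast
    then have "\<exists>N. \<forall>k\<ge>N. g (Xv k x0M) = 0" by (rule gdual_Xv_ev)
    then show ?thesis unfolding Nf_def by (rule someI_ex)
  qed
  define D where "D = (\<Sum>g\<in>G. Nf g)"
  have "Pd D g" if "g \<in> G" for g
  proof -
    have "Nf g \<le> D" unfolding D_def using G(2) that by (intro member_le_sum) auto
    have gg: "g \<in> gdual modx_smul" using that G(1) by blast
    show ?thesis unfolding Pd_def
    proof (intro conjI allI impI)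
      fix k :: nat assume "k > D" then show "g (Xv k x0M) = 0" using Nf[OF that] \<open>Nf g \<le> D\<close> by simp
    next
      fix k :: nat assume "k \<ge> 1" then show "re (g (Xv k x0M)) = 0" by (rule gdualM_re[OF gg])
    qed
  qed
  then have "\<And>u. u \<in> gdual modx_smul \<Longrightarrow> Pd D u" using dsubalg_Pd G(3) by blast
  then show False using witness[of D] by blast
qed

theorem mainTheorem18:
  shows "(\<exists>\<phi>. gamma_quot_iso modx_smul \<phi> (gen_ideal {monom xeps 1}))
    \<and> (\<exists>\<Psi>. dual_iso ((*) :: dualnum \<Rightarrow> dualnum \<Rightarrow> dualnum) \<Psi> UNIV)
    \<and> (\<exists>\<Phi>. dual_iso modx_smul \<Phi> (palg {monom xeps k | k. k \<ge> 1}))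
    \<and> dsubalg {u \<in> gdual modx_smul. dhomog 1 u} \<noteq> gdual modx_smul
    \<and> \<not> (\<exists>G. G \<subseteq> gdual modx_smul \<and> finite G \<and> dsubalg G = gdual modx_smul)"
  using GammaM_quot GammaA_dual GammaM_dual not_deg1 not_fg by blast


end
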